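(* Let $q\geq 2$ be an integer and fix a real number $c_0>0$. For every real number $b>0$ there exists a positive integer $n_0$ such that for every integer $n\geq n_0$ and every integer $k$ of the form $k=\frac{n(q-1)}{2q}\bigl(\log(n(q-1))-c\bigr)$ with $0\leq c\leq \min\{c_0,\log(n(q-1))\}$, we have $$\Vert \nu_n^{*k}-\pi_n\Vert_{TV}\geq 1-(4q+b)e^{-c}.$$
   Context: For integers $n\geq1$, $q\geq2$, the Hamming scheme $H(n,q)$ is the graph with vertex set $X_n=\{0,1,\dots,q-1\}^n$ in which $x$ and $x'$ are adjacent ($x\sim x'$) iff they differ in exactly one coordinate. The simple random walk has transition probability $p_n(x,x')=\frac{1}{n(q-1)}$ if $x\sim x'$ and $0$ otherwise. Let $p_n^{(k)}$ denote the $k$-step transition probability ($p_n^{(0)}(x,x')=\delta_{x,x'}$), $x^{(0)}=(0,\dots,0)$, and $\nu_n^{*k}(x)=p_n^{(k)}(x^{(0)},x)$. $\pi_n$ is the uniform probability measure on $X_n$. For measures $\mu,\nu$ on $X_n$, $\Vert\mu-\nu\Vert_{TV}=\max_{S\subset X_n}|\mu(S)-\nu(S)|$. *)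

theory Defs
  imports "HOL-Analysis.Analysis"
begin

definition ham_X :: "nat \<Rightarrow> nat \<Rightarrow> (nat \<Rightarrow> nat) set" where
  "ham_X n q = PiE {..<n} (\<lambda>_. {..<q})"

definition ham_adj :: "nat \<Rightarrow> (nat \<Rightarrow> nat) \<Rightarrow> (nat \<Rightarrow> nat) \<Rightarrow> bool" where
  "ham_adj n x x' \<longleftrightarrow> card {i \<in> {..<n}. x i \<noteq> x' i} = 1"

definition ham_p :: "nat \<Rightarrow> nat \<Rightarrow> (nat \<Rightarrow> nat) \<Rightarrow> (nat \<Rightarrow> nat) \<Rightarrow> real" where
  "ham_p n q x x' = (if ham_adj n x x' then 1 / (real n * (real q - 1)) else 0)"

fun ham_pk :: "nat \<Rightarrow> nat \<Rightarrow> nat \<Rightarrow> (nat \<Rightarrow> nat) \<Rightarrow> (nat \<Rightarrow> nat) \<Rightarrow> real" where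
  "ham_pk n q 0 x x' = (if x = x' then 1 else 0)"
| "ham_pk n q (Suc k) x x' = (\<Sum>y\<in>ham_X n q. ham_pk n q k x y * ham_p n q y x')"

definition ham_x0 :: "nat \<Rightarrow> nat \<Rightarrow> nat" where
  "ham_x0 n = (\<lambda>i\<in>{..<n}. 0)"

definition ham_nu :: "nat \<Rightarrow> nat \<Rightarrow> nat \<Rightarrow> (nat \<Rightarrow> nat) \<Rightarrow> real" where
  "ham_nu n q k x = ham_pk n q k (ham_x0 n) x"

definition ham_pi :: "nat \<Rightarrow> nat \<Rightarrow> (nat \<Rightarrow> nat) \<Rightarrow> real" where
  "ham_pi n q x = 1 / real (card (ham_X n q))"

definition tv_dist :: "'a set \<Rightarrow> ('a \<Rightarrow> real) \<Rightarrow> ('a \<Rightarrow> real) \<Rightarrow> real" where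
  "tv_dist X mu nu = Max ((\<lambda>S. \<bar>(\<Sum>x\<in>S. mu x) - (\<Sum>x\<in>S. nu x)\<bar>) ` Pow X)"

end

theory Submission
  imports Defs
begin



definition Pop :: "nat \<Rightarrow> nat \<Rightarrow> ((nat\<Rightarrow>nat)\<Rightarrow>real) \<Rightarrow> (nat\<Rightarrow>nat) \<Rightarrow> real" where
 "Pop n q h y = (\<Sum>x\<in>ham_X n q. ham_p n q y x * h x)"
definition Zc :: "nat \<Rightarrow> (nat\<Rightarrow>nat) \<Rightarrow> real" where
 "Zc n x = (\<Sum>i<n. if x i = 0 then 1 else 0)"
definition Wc :: "nat \<Rightarrow> nat \<Rightarrow> (nat\<Rightarrow>nat) \<Rightarrow> real" where
 "Wc n q x = Zc n x - real n / real q"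
definition Ek :: "nat \<Rightarrow> nat \<Rightarrow> nat \<Rightarrow> ((nat\<Rightarrow>nat)\<Rightarrow>real) \<Rightarrow> real" where
 "Ek n q k h = (\<Sum>x\<in>ham_X n q. ham_nu n q k x * h x)"

lemma finite_X: "finite (ham_X n q)"
  unfolding ham_X_def by (simp add: finite_PiE)

lemma upd_in_X: "y \<in> ham_X n q \<Longrightarrow> m < n \<Longrightarrow> v < q \<Longrightarrow> y(m:=v) \<in> ham_X n q"
  unfolding ham_X_def by (auto simp: PiE_iff extensional_def)

lemma x0_in_X: "q > 0 \<Longrightarrow> ham_x0 n \<in> ham_X n q"
  unfolding ham_X_def ham_x0_def by (auto simp: PiE_iff)

lemma adj_sym: "ham_adj n x y = ham_adj n y x"
proof -
  have "{i\<in>{..<n}. x i \<noteq> y i} = {i\<in>{..<n}. y i \<noteq> x i}" by auto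
  then show ?thesis unfolding ham_adj_def by simp
qed

lemma p_sym: "ham_p n q x y = ham_p n q y x"
  unfolding ham_p_def using adj_sym[of n x y] by simp

lemma nbr_set:
  assumes y: "y \<in> ham_X n q"
  shows "{x\<in>ham_X n q. ham_adj n y x} = (\<lambda>(m,v). y(m:=v)) ` (SIGMA m:{..<n}. {..<q}-{y m})"
proof (intro equalityI subsetI)
  fix x assume xin: "x \<in> {x\<in>ham_X n q. ham_adj n y x}"
  have x: "x \<in> ham_X n q" using xin by simp
  have a: "card {i \<in> {..<n}. y i \<noteq> x i} = 1" using xin unfolding ham_adj_def by simp
  from a obtain m where m: "{i \<in> {..<n}. y i \<noteq> x i} = {m}" by (rule card_1_singletonE)
  have mm: "m \<in> {i \<in> {..<n}. y i \<noteq> x i}" using m by simp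
  have mn: "m < n" "y m \<noteq> x m" using mm by simp_all
  have "x = y(m := x m)"
  proof
    fix i show "x i = (y(m := x m)) i"
    proof (cases "i < n")
      case True
      show ?thesis
      proof (cases "i = m")
        case True then show ?thesis by simp
      next
        case False
        have "i \<notin> {i \<in> {..<n}. y i \<noteq> x i}" unfolding m using False by simp
        then show ?thesis using False \<open>i < n\<close> by simp
      qed
    next
      case False
      have "x i = undefined" using PiE_arb[of x "{..<n}" "\<lambda>_. {..<q}" i] x False unfolding ham_X_def by simp
      moreover have "y i = undefined" using PiE_arb[of y "{..<n}" "\<lambda>_. {..<q}" i] y False unfolding ham_X_def by simp
      ultimately show ?thesis using False mn by simp
    qed
  qed
  moreover have "x m < q" using x mn unfolding ham_X_def by (simp add: PiE_iff)
  ultimately show "x \<in> (\<lambda>(m,v). y(m:=v)) ` (SIGMA m:{..<n}. {..<q}-{y m})"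
    using mn by (intro image_eqI[where x="(m, x m)"]) simp_all
next
  fix x assume xin: "x \<in> (\<lambda>(m,v). y(m:=v)) ` (SIGMA m:{..<n}. {..<q}-{y m})"
  from xin obtain p where p: "p \<in> (SIGMA m:{..<n}. {..<q}-{y m})" and xe0: "x = (\<lambda>(m,v). y(m:=v)) p"
    by (rule imageE)
  obtain m v where pv: "p = (m,v)" by (cases p)
  have mv: "m < n" "v < q" "v \<noteq> y m" using p unfolding pv by simp_all
  have xe: "x = y(m:=v)" using xe0 unfolding pv by simp
  have se: "{i \<in> {..<n}. y i \<noteq> x i} = {m}"
  proof (intro equalityI subsetI)
    fix i assume i: "i \<in> {i \<in> {..<n}. y i \<noteq> x i}"
    show "i \<in> {m}"
    proof (rule ccontr)
      assume "i \<notin> {m}"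
      then have "x i = y i" unfolding xe by simp
      then show False using i by simp
    qed
  next
    fix i assume "i \<in> {m}"
    then show "i \<in> {i \<in> {..<n}. y i \<noteq> x i}" using mv unfolding xe by simp
  qed
  have "ham_adj n y x" unfolding ham_adj_def se by simp
  moreover have "x \<in> ham_X n q" unfolding xe by (rule upd_in_X[OF y mv(1,2)])
  ultimately show "x \<in> {x\<in>ham_X n q. ham_adj n y x}" by simp
qed

lemma nbr_inj: "inj_on (\<lambda>(m,v). y(m:=v)) (SIGMA m:{..<n}. {..<q}-{y m})"
proof (rule inj_onI)
  fix a b assume a: "a \<in> (SIGMA m:{..<n}. {..<q}-{y m})" and b: "b \<in> (SIGMA m:{..<n}. {..<q}-{y m})"
    and e: "(\<lambda>(m,v). y(m:=v)) a = (\<lambda>(m,v). y(m:=v)) b"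
  obtain m v where av: "a = (m,v)" by fastforce
  obtain m' v' where bv: "b = (m',v')" by fastforce
  have h: "y(m := v) = y(m' := v')" "v \<noteq> y m" "v' \<noteq> y m'" using a b e av bv by auto
  have "m = m'"
  proof (rule ccontr)
    assume "m \<noteq> m'"
    have "(y(m := v)) m = (y(m' := v')) m" using h(1) by simp
    then show False using h(2) \<open>m \<noteq> m'\<close> by simp
  qed
  moreover have "v = v'" using h \<open>m = m'\<close> by (metis fun_upd_same)
  ultimately show "a = b" using av bv by simp
qed

lemma Pop_nbr:
  assumes y: "y \<in> ham_X n q"
  shows "Pop n q h y = (\<Sum>m<n. \<Sum>v\<in>{..<q}-{y m}. h (y(m:=v))) / (real n * (real q - 1))"
proof -
  have "Pop n q h y = (\<Sum>x\<in>ham_X n q. if ham_adj n y x then h x / (real n * (real q - 1)) else 0)"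
    unfolding Pop_def ham_p_def by (rule sum.cong) auto
  also have "\<dots> = (\<Sum>x\<in>{x\<in>ham_X n q. ham_adj n y x}. h x / (real n * (real q - 1)))"
    by (simp add: sum.inter_filter finite_X)
  also have "\<dots> = (\<Sum>x\<in>{x\<in>ham_X n q. ham_adj n y x}. h x) / (real n * (real q - 1))"
    by (simp add: sum_divide_distrib)
  also have "(\<Sum>x\<in>{x\<in>ham_X n q. ham_adj n y x}. h x) = (\<Sum>p\<in>(SIGMA m:{..<n}. {..<q}-{y m}). h ((\<lambda>(m,v). y(m:=v)) p))"
    unfolding nbr_set[OF y] by (simp add: sum.reindex[OF nbr_inj])
  also have "\<dots> = (\<Sum>m<n. \<Sum>v\<in>{..<q}-{y m}. h (y(m:=v)))"
    by (subst sum.Sigma) (auto simp: case_prod_beta)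
  finally show ?thesis .
qed




lemma Zc_upd:
  assumes "m < n"
  shows "Zc n (y(m:=v)) = Zc n y - (if y m = 0 then 1 else 0) + (if v = 0 then 1 else 0)"
proof -
  have f: "finite {..<n}" "m \<in> {..<n}" using assms by auto
  have "Zc n (y(m:=v)) = (if v = 0 then 1 else 0) + (\<Sum>i\<in>{..<n}-{m}. if (y(m:=v)) i = 0 then 1 else 0)"
    unfolding Zc_def by (subst sum.remove[OF f]) simp
  also have "(\<Sum>i\<in>{..<n}-{m}. if (y(m:=v)) i = 0 then 1 else (0::real)) = (\<Sum>i\<in>{..<n}-{m}. if y i = 0 then 1 else 0)"
    by (rule sum.cong) auto
  moreover have "Zc n y = (if y m = 0 then 1 else 0) + (\<Sum>i\<in>{..<n}-{m}. if y i = 0 then 1 else 0)"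
    unfolding Zc_def by (subst sum.remove[OF f]) simp
  ultimately show ?thesis by simp
qed

lemma card_V: "u < (q::nat) \<Longrightarrow> card ({..<q}-{u}) = q - 1"
  by (simp add: card_Diff_singleton)

lemma sum_e: "u < (q::nat) \<Longrightarrow> (\<Sum>v\<in>{..<q}-{u}. if v = 0 then 1 else 0 :: real) = 1 - (if u = 0 then 1 else 0)"
proof (cases "u = 0")
  case True
  then show ?thesis by (intro trans[OF sum.neutral]) auto
next
  case False
  assume u: "u < q"
  have f: "finite ({..<q}-{u})" "0 \<in> {..<q}-{u}" using u False by auto
  have "(\<Sum>v\<in>{..<q}-{u}. if v = 0 then 1 else 0 :: real) = 1 + (\<Sum>v\<in>{..<q}-{u}-{0}. if v = 0 then 1 else 0 :: real)"
    by (subst sum.remove[OF f]) simp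
  also have "(\<Sum>v\<in>{..<q}-{u}-{0}. if v = 0 then 1 else 0 :: real) = 0"
    by (rule sum.neutral) auto
  finally show ?thesis using False by simp
qed

lemma S1: assumes "u < q"
  shows "(\<Sum>v\<in>{..<q}-{u}. c + (if v = 0 then 1 else 0)) = (real q - 1) * c + (1 - (if u = 0 then 1 else 0))"
proof -
  have "(\<Sum>v\<in>{..<q}-{u}. c + (if v = 0 then 1 else 0)) = (\<Sum>v\<in>{..<q}-{u}. c) + (\<Sum>v\<in>{..<q}-{u}. if v = 0 then 1 else 0 :: real)"
    by (rule sum.distrib)
  also have "\<dots> = real (q - 1) * c + (1 - (if u = 0 then 1 else 0))"
    using sum_e[OF assms] card_V[OF assms] by simp
  finally show ?thesis using assms by (simp add: of_nat_diff)
qed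

lemma S2: assumes "u < q"
  shows "(\<Sum>v\<in>{..<q}-{u}. (c + (if v = 0 then 1 else 0))^2) = (real q - 1) * c^2 + (2*c+1) * (1 - (if u = 0 then 1 else 0))"
proof -
  have "(\<Sum>v\<in>{..<q}-{u}. (c + (if v = 0 then 1 else 0))^2) = (\<Sum>v\<in>{..<q}-{u}. c^2 + (2*c+1) * (if v = 0 then 1 else 0))"
    by (rule sum.cong) (auto simp: power2_eq_square algebra_simps)
  also have "\<dots> = (\<Sum>v\<in>{..<q}-{u}. c^2) + (2*c+1) * (\<Sum>v\<in>{..<q}-{u}. if v = 0 then 1 else 0 :: real)"
    by (simp only: sum.distrib sum_distrib_left)
  also have "\<dots> = real (q - 1) * c^2 + (2*c+1) * (1 - (if u = 0 then 1 else 0))"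
    using sum_e[OF assms] card_V[OF assms] by simp
  finally show ?thesis using assms by (simp add: of_nat_diff)
qed

lemma ym_lt: "y \<in> ham_X n q \<Longrightarrow> m < n \<Longrightarrow> y m < q"
  unfolding ham_X_def by (auto simp: PiE_iff)

lemma Wc_upd: "m < n \<Longrightarrow> Wc n q (y(m:=v)) = (Wc n q y - (if y m = 0 then 1 else 0)) + (if v = 0 then 1 else 0)"
  unfolding Wc_def by (simp add: Zc_upd)

lemma inner1:
  assumes y: "y \<in> ham_X n q" and m: "m < n"
  shows "(\<Sum>v\<in>{..<q}-{y m}. Wc n q (y(m:=v))) = (real q - 1) * Wc n q y + 1 - real q * (if y m = 0 then 1 else 0)"
  using S1[OF ym_lt[OF y m], of "Wc n q y - (if y m = 0 then 1 else 0)"]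
  by (simp add: Wc_upd[OF m] algebra_simps)

lemma inner2:
  assumes y: "y \<in> ham_X n q" and m: "m < n"
  shows "(\<Sum>v\<in>{..<q}-{y m}. (Wc n q (y(m:=v)))^2) = (real q - 1) * (Wc n q y)^2
     - 2 * real q * Wc n q y * (if y m = 0 then 1 else 0) + 2 * Wc n q y + (real q - 2) * (if y m = 0 then 1 else 0) + 1"
  using S2[OF ym_lt[OF y m], of "Wc n q y - (if y m = 0 then 1 else 0)"]
  by (cases "y m = 0") (simp_all add: Wc_upd[OF m] algebra_simps power2_eq_square)

lemma PW:
  assumes y: "y \<in> ham_X n q" and q: "q \<ge> 1"
  shows "Pop n q (Wc n q) y = (real n * (real q - 1) - real q) * Wc n q y / (real n * (real q - 1))"
proof -
  have "(\<Sum>m<n. \<Sum>v\<in>{..<q}-{y m}. Wc n q (y(m:=v))) = (\<Sum>m<n. (real q - 1) * Wc n q y + 1 - real q * (if y m = 0 then 1 else 0))"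
    by (rule sum.cong) (auto simp: inner1[OF y])
  also have "\<dots> = real n * ((real q - 1) * Wc n q y + 1) - real q * Zc n y"
    unfolding Zc_def by (simp add: sum_subtractf sum.distrib sum_distrib_left)
  also have "\<dots> = (real n * (real q - 1) - real q) * Wc n q y"
    unfolding Wc_def using q by (simp add: field_simps)
  finally show ?thesis by (simp add: Pop_nbr[OF y])
qed

lemma PW2:
  assumes y: "y \<in> ham_X n q" and q: "q \<ge> 1"
  shows "Pop n q (\<lambda>x. (Wc n q x)^2) y = ((real n * (real q - 1) - 2 * real q) * (Wc n q y)^2
     + (real q - 2) * Wc n q y + 2 * real n * (real q - 1) / real q) / (real n * (real q - 1))"
proof -
  have "(\<Sum>m<n. \<Sum>v\<in>{..<q}-{y m}. (Wc n q (y(m:=v)))^2) = (\<Sum>m<n. ((real q - 1) * (Wc n q y)^2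
     + 2 * Wc n q y + 1) + (real q - 2 - 2 * real q * Wc n q y) * (if y m = 0 then 1 else 0))"
    by (rule sum.cong) (auto simp: inner2[OF y] algebra_simps)
  also have "\<dots> = real n * ((real q - 1) * (Wc n q y)^2 + 2 * Wc n q y + 1) + (real q - 2 - 2 * real q * Wc n q y) * Zc n y"
    unfolding Zc_def by (simp add: sum.distrib sum_distrib_left)
  also have "\<dots> = (real n * (real q - 1) - 2 * real q) * (Wc n q y)^2
     + (real q - 2) * Wc n q y + 2 * real n * (real q - 1) / real q"
    unfolding Wc_def using q by (simp add: algebra_simps power2_eq_square add_divide_distrib diff_divide_distrib)
  finally show ?thesis by (simp add: Pop_nbr[OF y])
qed




lemma Ek_Suc: "Ek n q (Suc k) h = Ek n q k (Pop n q h)"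
proof -
  have "Ek n q (Suc k) h = (\<Sum>x\<in>ham_X n q. \<Sum>y\<in>ham_X n q. ham_pk n q k (ham_x0 n) y * ham_p n q y x * h x)"
    unfolding Ek_def ham_nu_def by (simp add: sum_distrib_right)
  also have "\<dots> = (\<Sum>y\<in>ham_X n q. \<Sum>x\<in>ham_X n q. ham_pk n q k (ham_x0 n) y * ham_p n q y x * h x)"
    by (rule sum.swap)
  also have "\<dots> = Ek n q k (Pop n q h)"
    unfolding Ek_def ham_nu_def Pop_def by (simp add: sum_distrib_left mult.assoc)
  finally show ?thesis .
qed

lemma Ek_0: "q > 0 \<Longrightarrow> Ek n q 0 h = h (ham_x0 n)"
proof -
  assume q: "q > 0"
  have "Ek n q 0 h = (\<Sum>x\<in>ham_X n q. if ham_x0 n = x then h x else 0)"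
    unfolding Ek_def ham_nu_def by (rule sum.cong) auto
  then show ?thesis using x0_in_X[OF q, of n] by (simp add: finite_X)
qed

lemma Ek_cong: "(\<And>x. x \<in> ham_X n q \<Longrightarrow> h x = g x) \<Longrightarrow> Ek n q k h = Ek n q k g"
  unfolding Ek_def by (rule sum.cong) auto

lemma Ek_lin: "Ek n q k (\<lambda>x. a * h x + b * g x + c) = a * Ek n q k h + b * Ek n q k g + c * Ek n q k (\<lambda>_. 1)"
  unfolding Ek_def by (simp add: sum.distrib sum_distrib_left algebra_simps)

lemma Pop_one:
  assumes y: "y \<in> ham_X n q" and "n \<ge> 1" "q \<ge> 2"
  shows "Pop n q (\<lambda>_. 1) y = 1"
proof -
  have "(\<Sum>m<n. \<Sum>v\<in>{..<q}-{y m}. (1::real)) = (\<Sum>m<n. real q - 1)"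
    by (rule sum.cong) (use assms in \<open>auto simp: card_V[OF ym_lt[OF y]] of_nat_diff\<close>)
  also have "\<dots> = real n * (real q - 1)" by simp
  finally show ?thesis using assms by (simp add: Pop_nbr[OF y])
qed

lemma p_nonneg: "q \<ge> 1 \<Longrightarrow> ham_p n q x y \<ge> 0"
  unfolding ham_p_def by auto

lemma pk_nonneg: "q \<ge> 1 \<Longrightarrow> ham_pk n q k x y \<ge> 0"
  by (induction k arbitrary: y) (auto intro!: sum_nonneg mult_nonneg_nonneg p_nonneg)

lemma sum_Pop:
  assumes "n \<ge> 1" "q \<ge> 2"
  shows "(\<Sum>y\<in>ham_X n q. Pop n q h y) = (\<Sum>y\<in>ham_X n q. h y)"
proof -
  have "(\<Sum>y\<in>ham_X n q. Pop n q h y) = (\<Sum>y\<in>ham_X n q. \<Sum>x\<in>ham_X n q. ham_p n q y x * h x)"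
    unfolding Pop_def ..
  also have "\<dots> = (\<Sum>x\<in>ham_X n q. \<Sum>y\<in>ham_X n q. ham_p n q x y * h x)"
    by (subst sum.swap) (simp add: p_sym)
  also have "\<dots> = (\<Sum>x\<in>ham_X n q. h x * Pop n q (\<lambda>_. 1) x)"
    unfolding Pop_def by (simp add: sum_distrib_left sum_distrib_right mult.commute)
  also have "\<dots> = (\<Sum>x\<in>ham_X n q. h x)"
    by (rule sum.cong) (auto simp: Pop_one[OF _ assms])
  finally show ?thesis .
qed

context
  fixes n q :: nat
  assumes q2: "q \<ge> 2" and n4: "n \<ge> 4"
begin

definition "NN = real n * (real q - 1)"

lemma NN_ge: "NN \<ge> 2 * real q"
proof -
  have "real n * (real q - 1) \<ge> 4 * (real q - 1)" using n4 q2 by (intro mult_right_mono) auto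
  then show ?thesis unfolding NN_def using q2 by simp
qed

lemma NN_pos: "NN > 0" using NN_ge q2 by simp

lemma e0: "Ek n q k (\<lambda>_. 1) = 1"
proof (induction k)
  case 0 then show ?case using q2 by (simp add: Ek_0)
next
  case (Suc k)
  have "Ek n q (Suc k) (\<lambda>_. 1) = Ek n q k (\<lambda>_. 1)"
    unfolding Ek_Suc by (rule Ek_cong) (use Pop_one q2 n4 in auto)
  then show ?case using Suc by simp
qed

lemma W0: "Wc n q (ham_x0 n) = NN / real q"
proof -
  have "Zc n (ham_x0 n) = real n" unfolding Zc_def ham_x0_def by simp
  then show ?thesis unfolding Wc_def NN_def using q2 by (simp add: field_simps)
qed

lemma w1: "Ek n q k (Wc n q) = ((NN - real q) / NN)^k * (NN / real q)"
proof (induction k)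
  case 0 then show ?case using q2 by (simp add: Ek_0 W0)
next
  case (Suc k)
  have "Ek n q (Suc k) (Wc n q) = Ek n q k (\<lambda>x. ((NN - real q) / NN) * Wc n q x + 0 * Wc n q x + 0)"
    unfolding Ek_Suc by (rule Ek_cong) (use PW q2 in \<open>auto simp: NN_def\<close>)
  also have "\<dots> = ((NN - real q) / NN) * Ek n q k (Wc n q)"
    using Ek_lin[of n q k "(NN - real q)/NN" "Wc n q" 0 "Wc n q" 0] by simp
  finally show ?case using Suc by simp
qed

lemma w2_rec: "Ek n q (Suc k) (\<lambda>x. (Wc n q x)^2) =
   ((NN - 2 * real q) / NN) * Ek n q k (\<lambda>x. (Wc n q x)^2) + ((real q - 2) / NN) * Ek n q k (Wc n q) + 2 / real q"
proof -
  have "Ek n q (Suc k) (\<lambda>x. (Wc n q x)^2) = Ek n q k (\<lambda>x. ((NN - 2 * real q) / NN) * (Wc n q x)^2 + ((real q - 2) / NN) * Wc n q x + 2 / real q)"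
    unfolding Ek_Suc
  proof (rule Ek_cong)
    fix x assume x: "x \<in> ham_X n q"
    show "Pop n q (\<lambda>x. (Wc n q x)\<^sup>2) x = ((NN - 2 * real q) / NN) * (Wc n q x)^2 + ((real q - 2) / NN) * Wc n q x + 2 / real q"
    proof -
      have "Pop n q (\<lambda>x. (Wc n q x)\<^sup>2) x = ((NN - 2 * real q) * (Wc n q x)^2 + (real q - 2) * Wc n q x + 2 * NN / real q) / NN"
        using PW2[OF x] q2 unfolding NN_def by (simp add: mult.assoc)
      also have "\<dots> = ((NN - 2 * real q) / NN) * (Wc n q x)^2 + ((real q - 2) / NN) * Wc n q x + (2 * NN / real q) / NN"
        by (simp add: add_divide_distrib)
      also have "(2 * NN / real q) / NN = 2 / real q" using NN_pos by simp
      finally show ?thesis .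
    qed
  qed
  also have "\<dots> = ((NN - 2 * real q) / NN) * Ek n q k (\<lambda>x. (Wc n q x)^2) + ((real q - 2) / NN) * Ek n q k (Wc n q) + 2 / real q"
    using Ek_lin[of n q k "(NN - 2 * real q) / NN" "\<lambda>x. (Wc n q x)^2" "(real q - 2) / NN" "Wc n q" "2 / real q"] e0 by simp
  finally show ?thesis .
qed


lemma lam_facts: "0 < (NN - real q) / NN" "(NN - real q) / NN \<le> 1"
  "0 \<le> (NN - 2 * real q) / NN" "(NN - 2 * real q) / NN \<le> ((NN - real q) / NN)^2"
proof -
  show "0 < (NN - real q) / NN" using NN_ge NN_pos q2 by simp
  show "(NN - real q) / NN \<le> 1" using NN_pos by simp
  show "0 \<le> (NN - 2 * real q) / NN" using NN_ge NN_pos by simp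
  have "(NN - 2 * real q) * NN \<le> (NN - real q)^2" by (simp add: power2_eq_square algebra_simps)
  then show "(NN - 2 * real q) / NN \<le> ((NN - real q) / NN)^2"
    using NN_pos by (simp add: power_divide field_simps power2_eq_square)
qed

lemma var_bd: "Ek n q k (\<lambda>x. (Wc n q x)^2) - (Ek n q k (Wc n q))^2 \<le> NN / (2 * real q)"
proof (induction k)
  case 0 then show ?case using q2 NN_pos by (simp add: Ek_0)
next
  case (Suc k)
  define l where "l = (NN - real q) / NN"
  define m where "m = (NN - 2 * real q) / NN"
  define s where "s = Ek n q k (\<lambda>x. (Wc n q x)^2)"
  define w where "w = Ek n q k (Wc n q)"
  define B where "B = NN / (2 * real q)"
  have lf: "0 < l" "l \<le> 1" "0 \<le> m" "m \<le> l^2" using lam_facts unfolding l_def m_def by auto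
  have wdef: "w = l^k * (NN / real q)" unfolding w_def l_def by (rule w1)
  have w0: "0 \<le> w" using lf NN_pos q2 wdef by simp
  have lk: "l^k \<le> 1" using lf by (simp add: power_le_one)
  have wA: "w \<le> NN / real q" unfolding wdef using mult_right_mono[OF lk, of "NN / real q"] NN_pos by simp
  have IH: "s \<le> w^2 + B" using Suc unfolding s_def w_def B_def by simp
  have s': "Ek n q (Suc k) (\<lambda>x. (Wc n q x)^2) = m * s + ((real q - 2) / NN) * w + 2 / real q"
    unfolding m_def s_def w_def by (rule w2_rec)
  have w': "Ek n q (Suc k) (Wc n q) = l * w"
    unfolding wdef l_def using w1[of "Suc k"] by simp
  have a1: "m * s \<le> m * (w^2 + B)" using IH lf by (intro mult_left_mono) auto
  have a2: "m * w^2 \<le> l^2 * w^2" using lf by (intro mult_right_mono) auto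
  have cq: "0 \<le> (real q - 2) / NN" using q2 NN_pos by simp
  have a3: "((real q - 2) / NN) * w \<le> ((real q - 2) / NN) * (NN / real q)"
    using wA cq by (intro mult_left_mono) auto
  have e3: "((real q - 2) / NN) * (NN / real q) = (real q - 2) / real q" using NN_pos by simp
  have e4: "m * B = B - 1" unfolding m_def B_def using NN_pos q2 by (simp add: field_simps)
  have e5: "(real q - 2) / real q + 2 / real q = 1" using q2 by (simp add: field_simps)
  have "(l * w)^2 = l^2 * w^2" by (simp add: power_mult_distrib)
  then show ?case unfolding s' w' using a1 a2 a3 e3 e4 e5 unfolding B_def[symmetric]
    by (simp add: algebra_simps)
qed

lemma sumW: "(\<Sum>x\<in>ham_X n q. Wc n q x) = 0"
proof -
  have "(\<Sum>x\<in>ham_X n q. Wc n q x) = (\<Sum>x\<in>ham_X n q. Pop n q (Wc n q) x)"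
    by (rule sym, rule sum_Pop) (use n4 q2 in auto)
  also have "\<dots> = (\<Sum>x\<in>ham_X n q. ((NN - real q) / NN) * Wc n q x)"
  proof (rule sum.cong)
    fix x assume x: "x \<in> ham_X n q"
    show "Pop n q (Wc n q) x = ((NN - real q) / NN) * Wc n q x"
      using PW[OF x] q2 unfolding NN_def by simp
  qed simp
  also have "\<dots> = ((NN - real q) / NN) * (\<Sum>x\<in>ham_X n q. Wc n q x)"
    by (simp add: sum_distrib_left)
  finally have eq: "(\<Sum>x\<in>ham_X n q. Wc n q x) = ((NN - real q) / NN) * (\<Sum>x\<in>ham_X n q. Wc n q x)" .
  have "(1 - (NN - real q) / NN) * (\<Sum>x\<in>ham_X n q. Wc n q x) = (\<Sum>x\<in>ham_X n q. Wc n q x) - ((NN - real q) / NN) * (\<Sum>x\<in>ham_X n q. Wc n q x)"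
    by (simp add: left_diff_distrib)
  with eq have "(1 - (NN - real q) / NN) * (\<Sum>x\<in>ham_X n q. Wc n q x) = 0" by linarith
  moreover have "1 - (NN - real q) / NN \<noteq> 0" using NN_pos q2 by (simp add: field_simps)
  ultimately show ?thesis using mult_eq_0_iff by blast
qed

lemma sumW2: "(\<Sum>x\<in>ham_X n q. (Wc n q x)^2) = real (card (ham_X n q)) * NN / (real q)^2"
proof -
  define m where "m = (NN - 2 * real q) / NN"
  have "(\<Sum>x\<in>ham_X n q. (Wc n q x)^2) = (\<Sum>x\<in>ham_X n q. Pop n q (\<lambda>x. (Wc n q x)^2) x)"
    using sum_Pop[of n q] n4 q2 by simp
  also have "\<dots> = (\<Sum>x\<in>ham_X n q. m * (Wc n q x)^2 + ((real q - 2) / NN) * Wc n q x + 2 / real q)"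
  proof (rule sum.cong)
    fix x assume x: "x \<in> ham_X n q"
    have "Pop n q (\<lambda>x. (Wc n q x)\<^sup>2) x = ((NN - 2 * real q) * (Wc n q x)^2 + (real q - 2) * Wc n q x + 2 * NN / real q) / NN"
      using PW2[OF x] q2 unfolding NN_def by (simp add: mult.assoc)
    also have "\<dots> = ((NN - 2 * real q) / NN) * (Wc n q x)^2 + ((real q - 2) / NN) * Wc n q x + (2 * NN / real q) / NN"
      by (simp add: add_divide_distrib)
    also have "(2 * NN / real q) / NN = 2 / real q" using NN_pos by simp
    finally show "Pop n q (\<lambda>x. (Wc n q x)\<^sup>2) x = m * (Wc n q x)^2 + ((real q - 2) / NN) * Wc n q x + 2 / real q"
      unfolding m_def .
  qed simp
  also have "\<dots> = m * (\<Sum>x\<in>ham_X n q. (Wc n q x)^2) + ((real q - 2) / NN) * (\<Sum>x\<in>ham_X n q. Wc n q x) + real (card (ham_X n q)) * (2 / real q)"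
    by (simp add: sum.distrib sum_distrib_left)
  finally have "(1 - m) * (\<Sum>x\<in>ham_X n q. (Wc n q x)^2) = real (card (ham_X n q)) * (2 / real q)"
    using sumW by (simp add: algebra_simps)
  moreover have "1 - m = 2 * real q / NN" unfolding m_def using NN_pos by (simp add: field_simps)
  ultimately show ?thesis using NN_pos q2 by (simp add: field_simps power2_eq_square)
qed


lemma tv_bd: "tv_dist (ham_X n q) (ham_nu n q kk) (ham_pi n q) \<ge>
   1 - 2 * (real q + 2) / (NN * ((NN - real q) / NN)^(2*kk))"
proof -
  define X where "X = ham_X n q"
  define l where "l = (NN - real q) / NN"
  define w where "w = Ek n q kk (Wc n q)"
  define s where "s = Ek n q kk (\<lambda>x. (Wc n q x)^2)"
  define t where "t = w / 2"
  define B where "B = NN / (2 * real q)"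
  define S where "S = {x\<in>X. Wc n q x \<ge> t}"
  have fX: "finite X" unfolding X_def by (rule finite_X)
  have SX: "S \<subseteq> X" unfolding S_def by auto
  have fS: "finite S" using finite_subset[OF SX fX] .
  have lp: "0 < l" using lam_facts unfolding l_def by simp
  have wdef: "w = l^kk * (NN / real q)" unfolding w_def l_def by (rule w1)
  have wp: "w > 0" unfolding wdef using lp NN_pos q2 by simp
  have tp: "t > 0" unfolding t_def using wp by simp
  have var: "s - w^2 \<le> B" unfolding s_def w_def B_def by (rule var_bd)
  have nn: "\<And>x. ham_nu n q kk x \<ge> 0" unfolding ham_nu_def using pk_nonneg q2 by simp
  have sum1: "(\<Sum>x\<in>X. ham_nu n q kk x) = 1" using e0[of kk] unfolding Ek_def X_def by simp
  \<comment> \<open>Chebyshev for nu\<close>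
  have "(\<Sum>x\<in>X-S. ham_nu n q kk x) \<le> (\<Sum>x\<in>X-S. ham_nu n q kk x * ((Wc n q x - w)^2 / t^2))"
  proof (rule sum_mono)
    fix x assume x: "x \<in> X - S"
    then have "Wc n q x < t" unfolding S_def by auto
    then have "t \<le> w - Wc n q x" unfolding t_def by simp
    then have "t^2 \<le> (w - Wc n q x)^2" using tp by (intro power_mono) auto
    then have "1 \<le> (Wc n q x - w)^2 / t^2" using tp by (simp add: power2_commute)
    then show "ham_nu n q kk x \<le> ham_nu n q kk x * ((Wc n q x - w)^2 / t^2)"
      using nn[of x] by (metis mult.right_neutral mult_left_mono)
  qed
  also have "\<dots> \<le> (\<Sum>x\<in>X. ham_nu n q kk x * ((Wc n q x - w)^2 / t^2))"
    using fX nn by (intro sum_mono2) (auto intro!: divide_nonneg_nonneg mult_nonneg_nonneg)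
  also have "\<dots> = (\<Sum>x\<in>X. ham_nu n q kk x * (Wc n q x - w)^2) / t^2"
    by (simp add: sum_divide_distrib)
  also have "(\<Sum>x\<in>X. ham_nu n q kk x * (Wc n q x - w)^2) = Ek n q kk (\<lambda>x. 1 * (Wc n q x)^2 + (-2*w) * Wc n q x + w^2)"
    unfolding Ek_def X_def by (rule sum.cong) (auto simp: power2_eq_square algebra_simps)
  also have "\<dots> = s - w^2"
    unfolding Ek_lin e0 s_def[symmetric] w_def[symmetric] by (simp add: power2_eq_square)
  finally have c1: "(\<Sum>x\<in>X-S. ham_nu n q kk x) \<le> B / t^2"
    using var tp by (smt (verit) divide_right_mono zero_le_power2)
  have nuS: "(\<Sum>x\<in>S. ham_nu n q kk x) \<ge> 1 - B / t^2"
    using c1 sum1 sum.subset_diff[OF SX fX, of "ham_nu n q kk"] by simp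
  \<comment> \<open>Chebyshev for pi\<close>
  have cX: "real (card X) > 0" using x0_in_X[of q n] q2 fX unfolding X_def by (auto simp: card_gt_0_iff)
  have "(\<Sum>x\<in>S. ham_pi n q x) \<le> (\<Sum>x\<in>S. (Wc n q x)^2 / t^2 / real (card X))"
  proof (rule sum_mono)
    fix x assume x: "x \<in> S"
    then have "t \<le> Wc n q x" unfolding S_def by auto
    then have "t^2 \<le> (Wc n q x)^2" using tp by (intro power_mono) auto
    then have r1: "1 \<le> (Wc n q x)^2 / t^2" using tp by simp
    have "1 / real (card X) \<le> (Wc n q x)^2 / t^2 / real (card X)"
      using divide_right_mono[OF r1, of "real (card X)"] cX by linarith
    then show "ham_pi n q x \<le> (Wc n q x)^2 / t^2 / real (card X)"
      unfolding ham_pi_def X_def[symmetric] .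
  qed
  also have "\<dots> \<le> (\<Sum>x\<in>X. (Wc n q x)^2 / t^2 / real (card X))"
    using fX SX by (intro sum_mono2) auto
  also have "\<dots> = (\<Sum>x\<in>X. (Wc n q x)^2) / t^2 / real (card X)"
    by (simp add: sum_divide_distrib)
  also have "\<dots> = (NN / (real q)^2) / t^2"
    unfolding X_def sumW2 using cX unfolding X_def by simp
  finally have piS: "(\<Sum>x\<in>S. ham_pi n q x) \<le> (NN / (real q)^2) / t^2" .
  have "tv_dist X (ham_nu n q kk) (ham_pi n q) \<ge> \<bar>(\<Sum>x\<in>S. ham_nu n q kk x) - (\<Sum>x\<in>S. ham_pi n q x)\<bar>"
    unfolding tv_dist_def using fX SX by (intro Max_ge) auto
  then have tv: "tv_dist X (ham_nu n q kk) (ham_pi n q) \<ge> 1 - (B + NN / (real q)^2) / t^2"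
    using nuS piS by (simp add: add_divide_distrib)
  have "(B + NN / (real q)^2) / t^2 = 2 * (real q + 2) / (NN * l^(2*kk))"
    unfolding B_def t_def wdef using NN_pos q2 lp
    by (simp add: field_simps power_mult_distrib power_mult power2_eq_square)
  then show ?thesis using tv unfolding X_def l_def by simp
qed

end



theorem theorem1p3:
  fixes q :: nat and c0 b :: real
  assumes "q \<ge> 2" and "c0 > 0" and "b > 0"
  shows "\<exists>n0::nat. n0 > 0 \<and>
    (\<forall>n::nat. \<forall>k::int. \<forall>c::real. n \<ge> n0 \<longrightarrow>
       real_of_int k = real n * (real q - 1) / (2 * real q) * (ln (real n * (real q - 1)) - c) \<longrightarrow>
       0 \<le> c \<longrightarrow> c \<le> min c0 (ln (real n * (real q - 1))) \<longrightarrow>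
       tv_dist (ham_X n q) (ham_nu n q (nat k)) (ham_pi n q) \<ge> 1 - (4 * real q + b) * exp (- c))"
proof -
  have q2: "q \<ge> 2" using assms by simp
  have qr: "real q \<ge> 2" using q2 by simp
  define d0 where "d0 = ln (1 + b / (4 * real q))"
  have bq: "b / (4 * real q) > 0" using assms qr by simp
  have d0p: "d0 > 0" unfolding d0_def using bq by (intro ln_gt_zero) simp
  define n0 where "n0 = max 4 (nat \<lceil>(4 * real q / d0)^2\<rceil>)"
  have n0a: "nat \<lceil>(4 * real q / d0)^2\<rceil> \<le> n0" unfolding n0_def by simp
  have n0r: "real n0 \<ge> (4 * real q / d0)^2"
    using real_nat_ceiling_ge[of "(4 * real q / d0)^2"] n0a[THEN of_nat_mono[where 'a=real]] by linarith
  show ?thesis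
  proof (intro exI[of _ n0] conjI allI impI)
    show "n0 > 0" unfolding n0_def by simp
    fix n :: nat and k :: int and c :: real
    assume nn0: "n0 \<le> n"
      and kdef: "real_of_int k = real n * (real q - 1) / (2 * real q) * (ln (real n * (real q - 1)) - c)"
      and c0: "0 \<le> c" and cL: "c \<le> min c0 (ln (real n * (real q - 1)))"
    have n4: "n \<ge> 4" using nn0 unfolding n0_def by simp
    define N where "N = real n * (real q - 1)"
    have NN: "NN n q = N" unfolding N_def using NN_def[OF q2 n4] by simp
    have Nge: "N \<ge> 2 * real q" using NN_ge[OF q2 n4] NN by simp
    have Np: "N > 0" using Nge qr by simp
    have Nn: "N \<ge> real n" unfolding N_def using mult_left_mono[of 1 "real q - 1" "real n"] qr by simp
    define L where "L = ln N"
    have cL': "c \<le> L" using cL unfolding L_def N_def by simp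
    define K where "K = real_of_int k"
    have Kdef: "K = N / (2 * real q) * (L - c)" unfolding K_def kdef N_def L_def ..
    have K0: "K \<ge> 0" unfolding Kdef using cL' Np qr by simp
    define kk where "kk = nat k"
    have kkK: "real kk = K" unfolding kk_def K_def using K0 K_def by simp
    define x where "x = real q / N"
    have x0: "x \<ge> 0" and xh: "x \<le> 1/2" unfolding x_def using Np Nge qr by (auto simp: field_simps)
    define l where "l = (N - real q) / N"
    have lx: "l = 1 - x" unfolding l_def x_def using Np by (simp add: field_simps)
    have lp: "l > 0" using lx xh by simp
    have lnl: "ln l \<ge> - x - 2 * x^2" unfolding lx by (rule ln_one_minus_pos_lower_bound[OF x0 xh])
    have Kx: "2 * K * x = L - c" unfolding Kdef x_def using Np qr by (simp add: field_simps)
    have "real (2*kk) * ln l \<ge> 2 * K * (- x - 2 * x^2)"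
      using lnl K0 kkK by (simp add: mult_left_mono)
    also have "2 * K * (- x - 2 * x^2) = -(2 * K * x) - 2 * x * (2 * K * x)"
      by (simp add: power2_eq_square algebra_simps)
    also have "\<dots> = -(L - c) - 2 * x * (L - c)"
      unfolding Kx by (rule refl)
    also have "\<dots> \<ge> -(L - c) - 2 * x * L"
      using x0 c0 by (simp add: mult_left_mono)
    finally have ex: "real (2*kk) * ln l \<ge> -(L - c) - 2 * x * L" .
    have lpow: "l^(2*kk) = exp (real (2*kk) * ln l)"
    proof -
      have "exp (real (2*kk) * ln l) = exp (ln (l^(2*kk)))" using ln_realpow[of l "2*kk"] by simp
      also have "\<dots> = l^(2*kk)" using lp by simp
      finally show ?thesis by simp
    qed
    define dl where "dl = 2 * x * L"
    have Nlow: "N * l^(2*kk) \<ge> exp (c - dl)"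
    proof -
      have "exp (c - dl) = N * exp (-(L - c) - 2 * x * L)"
        unfolding dl_def L_def using Np by (simp add: exp_diff exp_minus exp_add field_simps)
      also have "\<dots> \<le> N * l^(2*kk)" unfolding lpow using ex Np by simp
      finally show ?thesis .
    qed
    have sN: "sqrt N \<ge> 4 * real q / d0"
    proof -
      have "(4 * real q / d0)^2 \<le> N" using n0r nn0 Nn by (meson of_nat_le_iff order_trans)
      then have "sqrt ((4 * real q / d0)^2) \<le> sqrt N" by (rule real_sqrt_le_mono)
      then show ?thesis using d0p qr by simp
    qed
    have Lle: "L \<le> 2 * sqrt N"
    proof -
      have "ln (sqrt N) \<le> sqrt N - 1" using Np by (intro ln_le_minus_one) simp
      then show ?thesis unfolding L_def using Np by (simp add: ln_sqrt)
    qed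
    have "dl \<le> 2 * x * (2 * sqrt N)" unfolding dl_def using mult_left_mono[OF Lle, of "2 * x"] x0 by simp
    also have "2 * x * (2 * sqrt N) = 4 * real q / sqrt N"
    proof -
      have sq: "sqrt N * sqrt N = N" using Np by simp
      have sp: "sqrt N > 0" using Np by simp
      have "4 * real q / sqrt N = 4 * real q * sqrt N / (sqrt N * sqrt N)"
        by (rule nonzero_mult_divide_mult_cancel_right[symmetric]) (use sp in simp)
      also have "\<dots> = 2 * x * (2 * sqrt N)" unfolding sq x_def by simp
      finally show ?thesis by simp
    qed
    also have "\<dots> \<le> d0"
    proof -
      have "sqrt N > 0" using Np by simp
      then show ?thesis using sN d0p by (simp add: field_simps)
    qed
    finally have dle: "dl \<le> d0" .
    have "exp dl \<le> exp d0" using dle by simp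
    also have "exp d0 = 1 + b / (4 * real q)" unfolding d0_def using bq by simp
    finally have edl: "exp dl \<le> 1 + b / (4 * real q)" .
    have coef: "2 * (real q + 2) * (1 + b / (4 * real q)) \<le> 4 * real q + b"
    proof -
      have "2 * (real q + 2) * (1 + b / (4 * real q)) = 2 * (real q + 2) + b * (real q + 2) / (2 * real q)"
        using qr by (simp add: field_simps)
      also have "b * (real q + 2) / (2 * real q) \<le> b" using qr assms by (simp add: field_simps)
      finally show ?thesis using qr by simp
    qed
    have "2 * (real q + 2) / (N * l^(2*kk)) \<le> 2 * (real q + 2) / exp (c - dl)"
      using Nlow qr Np lp by (intro divide_left_mono) (auto intro!: mult_pos_pos)
    also have "\<dots> = 2 * (real q + 2) * exp dl * exp (- c)" by (simp add: exp_diff exp_minus field_simps)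
    also have "\<dots> \<le> 2 * (real q + 2) * (1 + b / (4 * real q)) * exp (- c)"
      using edl qr by (intro mult_right_mono mult_left_mono) auto
    also have "\<dots> \<le> (4 * real q + b) * exp (- c)" using coef by (intro mult_right_mono) auto
    finally have fin: "2 * (real q + 2) / (N * l^(2*kk)) \<le> (4 * real q + b) * exp (- c)" .
    have "tv_dist (ham_X n q) (ham_nu n q kk) (ham_pi n q) \<ge> 1 - 2 * (real q + 2) / (N * l^(2*kk))"
      using tv_bd[OF q2 n4, of kk] unfolding NN l_def .
    then show "tv_dist (ham_X n q) (ham_nu n q (nat k)) (ham_pi n q) \<ge> 1 - (4 * real q + b) * exp (- c)"
      using fin unfolding kk_def by linarith
  qed
qed


end
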